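(* Let $\varepsilon>0$ and let $\mathcal{P}$ be any bounded-derivative property of functions $f:[n]\to\mathbb{R}$. There is a distribution-free tester for $\mathcal{P}$ with proximity parameter $\varepsilon$ making $24\,\varepsilon^{-1}\log n$ queries.
   Context: A bounded-derivative property on $[n]$ is $\mathcal{P}=\{g:[n]\to\mathbb{R}: l(t)\le g(t+1)-g(t)\le u(t)\ \forall t\in[n-1]\}$ for some $l,u:[n-1]\to\mathbb{R}$ with $l(t)<u(t)$. A distribution-free tester does not know the distribution $\mathcal{D}$ on $[n]$ but may draw independent samples from it and query $f$ anywhere; for every $\mathcal{D}$ it must accept with probability $>2/3$ if $f\in\mathcal{P}$ and reject with probability $>2/3$ if $\min_{g\in\mathcal{P}}\Pr_{x\sim\mathcal{D}}[f(x)\ne g(x)]>\varepsilon$. *)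

theory Defs
  imports "HOL-Probability.Probability"
begin

text \<open>Domain [n] = {1..n}. Functions are total on nat; only their values on {1..n} matter.\<close>

definition bounded_derivative_property ::
  "nat \<Rightarrow> (nat \<Rightarrow> real) \<Rightarrow> (nat \<Rightarrow> real) \<Rightarrow> (nat \<Rightarrow> real) set" where
  "bounded_derivative_property n l u =
     {g. \<forall>t\<in>{1..n-1}. l t \<le> g (t+1) - g t \<and> g (t+1) - g t \<le> u t}"

definition in_prop :: "nat \<Rightarrow> (nat \<Rightarrow> real) set \<Rightarrow> (nat \<Rightarrow> real) \<Rightarrow> bool" where
  "in_prop n P f \<longleftrightarrow> (\<exists>g\<in>P. \<forall>x\<in>{1..n}. f x = g x)"

text \<open>f is eps-far from P w.r.t. D: every g in P disagrees with f on a set of D-mass > eps.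
  (Since D has finite support this is the same as min_g Pr[f \<noteq> g] > eps.)\<close>
definition far_from :: "nat pmf \<Rightarrow> (nat \<Rightarrow> real) set \<Rightarrow> real \<Rightarrow> (nat \<Rightarrow> real) \<Rightarrow> bool" where
  "far_from D P eps f \<longleftrightarrow> (\<forall>g\<in>P. measure_pmf.prob D {x. f x \<noteq> g x} > eps)"

datatype action = Sample | Query nat

type_synonym history = "(action \<times> nat \<times> real) list"

record tester =
  next_action :: "history \<Rightarrow> action pmf"
  decide :: "history \<Rightarrow> bool pmf"
  num_queries :: nat

fun run_tester :: "(history \<Rightarrow> action pmf) \<Rightarrow> nat pmf \<Rightarrow> (nat \<Rightarrow> real) \<Rightarrow> nat \<Rightarrow> history \<Rightarrow> history pmf" where
  "run_tester st D f 0 h = return_pmf h"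
| "run_tester st D f (Suc k) h =
     bind_pmf (st h) (\<lambda>a.
     bind_pmf (case a of Sample \<Rightarrow> D | Query y \<Rightarrow> return_pmf y) (\<lambda>x.
     run_tester st D f k (h @ [(a, x, f x)])))"

definition accept_prob :: "tester \<Rightarrow> nat pmf \<Rightarrow> (nat \<Rightarrow> real) \<Rightarrow> real" where
  "accept_prob T D f =
     measure_pmf.prob (bind_pmf (run_tester (next_action T) D f (num_queries T) []) (decide T)) {True}"

definition is_df_tester :: "nat \<Rightarrow> (nat \<Rightarrow> real) set \<Rightarrow> real \<Rightarrow> tester \<Rightarrow> bool" where
  "is_df_tester n P eps T \<longleftrightarrow>
     (\<forall>D f. set_pmf D \<subseteq> {1..n} \<longrightarrow>
        (in_prop n P f \<longrightarrow> accept_prob T D f > 2/3) \<and>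
        (far_from D P eps f \<longrightarrow> 1 - accept_prob T D f > 2/3))"

end

theory Submission
  imports Defs
begin

definition csn :: "(nat\<Rightarrow>real) \<Rightarrow> (nat\<Rightarrow>real) \<Rightarrow> nat \<Rightarrow> real \<Rightarrow> nat \<Rightarrow> real \<Rightarrow> bool" where
 "csn l u x v y w \<longleftrightarrow> sum l {x..<y} \<le> w - v \<and> w - v \<le> sum u {x..<y}"

definition okh :: "nat \<Rightarrow> (nat\<Rightarrow>real) \<Rightarrow> (nat\<Rightarrow>real) \<Rightarrow> history \<Rightarrow> bool" where
 "okh n l u h \<longleftrightarrow> (\<forall>e\<in>set h. \<forall>e'\<in>set h. fst (snd e) \<in> {1..n} \<longrightarrow> fst (snd e') \<in> {1..n} \<longrightarrow>
     fst (snd e) < fst (snd e') \<longrightarrow> csn l u (fst (snd e)) (snd (snd e)) (fst (snd e')) (snd (snd e')))"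

lemma okh_append: "okh n l u (a @ b) \<Longrightarrow> okh n l u a"
  by (auto simp: okh_def)

definition qpt :: "nat \<Rightarrow> nat \<Rightarrow> nat" where
  "qpt x i = (if even i then x div 2^(i div 2) * 2^(i div 2) else (x div 2^(i div 2) + 1) * 2^(i div 2))"

definition blk :: "(nat \<Rightarrow> real) \<Rightarrow> nat \<Rightarrow> nat \<Rightarrow> history" where
  "blk f m x = (Sample, x, f x) # map (\<lambda>i. (Query (qpt x i), qpt x i, f (qpt x i))) [0..<2*m]"

definition nact :: "nat \<Rightarrow> history \<Rightarrow> action pmf" where
  "nact m h = (let r = length h mod (2*m+1) in if r = 0 then return_pmf Sample
      else return_pmf (Query (qpt (fst (snd (h ! (length h - r)))) (r - 1))))"

lemma run_set: "h' \<in> set_pmf (run_tester st D f s h) \<Longrightarrow>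
   \<exists>t. h' = h @ t \<and> (\<forall>e\<in>set t. snd (snd e) = f (fst (snd e)))"
proof (induction s arbitrary: h)
  case 0 thus ?case by simp
next
  case (Suc s)
  from Suc.prems have "\<exists>a x. h' \<in> set_pmf (run_tester st D f s (h @ [(a, x, f x)]))"
    apply (auto split: action.splits) by (metis action.exhaust)
  then obtain a x where "h' \<in> set_pmf (run_tester st D f s (h @ [(a, x, f x)]))" by blast
  from Suc.IH[OF this] obtain t where "h' = (h @ [(a,x,f x)]) @ t" "\<forall>e\<in>set t. snd (snd e) = f (fst (snd e))"
    by blast
  thus ?case by (intro exI[of _ "(a,x,f x) # t"]) auto
qed

lemma blk_steps:
  assumes "length h mod (2*m+1) = 0"
  shows "i + d = 2*m \<Longrightarrow> run_tester (nact m) D f (d + s) (h @ take (Suc i) (blk f m x))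
          = run_tester (nact m) D f s (h @ blk f m x)"
proof (induction d arbitrary: i)
  case 0 then have "take (Suc i) (blk f m x) = blk f m x" by (simp add: blk_def)
  thus ?case by simp
next
  case (Suc d)
  have i: "i < 2*m" using Suc.prems by simp
  have len: "length (h @ take (Suc i) (blk f m x)) mod (2*m+1) = Suc i"
  proof -
    have "length (h @ take (Suc i) (blk f m x)) = length h + Suc i" using i by (simp add: blk_def)
    also have "(length h + Suc i) mod (2*m+1) = Suc i mod (2*m+1)"
      using assms by (metis add_0 mod_add_left_eq)
    finally show ?thesis using i by simp
  qed
  have nth: "(h @ take (Suc i) (blk f m x)) ! length h = (Sample, x, f x)"
    by (simp add: nth_append blk_def)
  have lh: "length (h @ take (Suc i) (blk f m x)) - Suc i = length h" using i by (simp add: blk_def)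
  have act: "nact m (h @ take (Suc i) (blk f m x)) = return_pmf (Query (qpt x i))"
    using len nth lh unfolding nact_def Let_def by simp
  have tk: "take (Suc i) (blk f m x) @ [(Query (qpt x i), qpt x i, f (qpt x i))] = take (Suc (Suc i)) (blk f m x)"
  proof -
    have "Suc i < length (blk f m x)" using i by (simp add: blk_def)
    moreover have "blk f m x ! Suc i = (Query (qpt x i), qpt x i, f (qpt x i))"
      using i by (simp add: blk_def)
    ultimately show ?thesis by (simp add: take_Suc_conv_app_nth)
  qed
  have "run_tester (nact m) D f (Suc d + s) (h @ take (Suc i) (blk f m x))
      = run_tester (nact m) D f (d + s) (h @ take (Suc (Suc i)) (blk f m x))"
    by (simp add: act tk[symmetric] bind_return_pmf)
  also have "\<dots> = run_tester (nact m) D f s (h @ blk f m x)" using Suc.IH[of "Suc i"] Suc.prems by simp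
  finally show ?case .
qed

lemma blk_run:
  assumes "length h mod (2*m+1) = 0"
  shows "run_tester (nact m) D f (2*m+1+s) h = bind_pmf D (\<lambda>x. run_tester (nact m) D f s (h @ blk f m x))"
proof -
  have e: "2*m+1+s = Suc (2*m+s)" by simp
  have act: "nact m h = return_pmf Sample" using assms by (simp add: nact_def)
  have "run_tester (nact m) D f (2*m+1+s) h = bind_pmf D (\<lambda>x. run_tester (nact m) D f (2*m+s) (h@[(Sample,x,f x)]))"
    unfolding e by (simp add: act bind_return_pmf)
  also have "\<dots> = bind_pmf D (\<lambda>x. run_tester (nact m) D f s (h @ blk f m x))"
    using blk_steps[OF assms, of 0 "2*m"] by (simp add: blk_def)
  finally show ?thesis .
qed


lemma far_bound:
  assumes bad: "\<forall>x\<in>set_pmf D. x \<notin> G \<longrightarrow> (\<forall>h0 t. \<not> okh n l u (h0 @ blk f m x @ t))"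
  shows "length h mod (2*m+1) = 0 \<Longrightarrow>
    emeasure (measure_pmf (run_tester (nact m) D f (k*(2*m+1)) h)) {h'. okh n l u h'}
      \<le> emeasure (measure_pmf D) G ^ k"
proof (induction k arbitrary: h)
  case 0
  then show ?case by (simp add: indicator_def)
next
  case (Suc k)
  let ?E = "emeasure (measure_pmf D) G"
  have e: "Suc k * (2*m+1) = 2*m+1 + k*(2*m+1)" by simp
  have "emeasure (measure_pmf (run_tester (nact m) D f (Suc k*(2*m+1)) h)) {h'. okh n l u h'}
      = (\<integral>\<^sup>+x. emeasure (measure_pmf (run_tester (nact m) D f (k*(2*m+1)) (h @ blk f m x))) {h'. okh n l u h'} \<partial>measure_pmf D)"
    unfolding e blk_run[OF Suc.prems] by simp
  also have "\<dots> \<le> (\<integral>\<^sup>+x. ?E ^ k * indicator G x \<partial>measure_pmf D)"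
  proof (rule nn_integral_mono_AE, rule AE_pmfI)
    fix x assume x: "x \<in> set_pmf D"
    show "emeasure (measure_pmf (run_tester (nact m) D f (k*(2*m+1)) (h @ blk f m x))) {h'. okh n l u h'}
        \<le> ?E ^ k * indicator G x"
    proof (cases "x \<in> G")
      case True
      have "length (h @ blk f m x) = length h + (2*m+1)" by (simp add: blk_def)
      hence "length (h @ blk f m x) mod (2*m+1) = 0"
        using Suc.prems by (simp only: mod_add_self2)
      with Suc.IH show ?thesis using True by simp
    next
      case False
      have "set_pmf (run_tester (nact m) D f (k*(2*m+1)) (h @ blk f m x)) \<inter> {h'. okh n l u h'} = {}"
      proof (rule ccontr)
        assume "\<not> ?thesis"
        then obtain h' where h': "h' \<in> set_pmf (run_tester (nact m) D f (k*(2*m+1)) (h @ blk f m x))" "okh n l u h'"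
          by blast
        from run_set[OF h'(1)] obtain t where "h' = (h @ blk f m x) @ t" by blast
        with h'(2) bad x False show False by simp
      qed
      hence "measure_pmf.prob (run_tester (nact m) D f (k*(2*m+1)) (h @ blk f m x)) {h'. okh n l u h'} = 0"
        using measure_pmf_zero_iff by blast
      thus ?thesis by (simp add: measure_pmf.emeasure_eq_measure)
    qed
  qed
  also have "\<dots> = ?E ^ k * ?E" by (rule nn_integral_cmult_indicator) simp
  also have "\<dots> = ?E ^ Suc k" by (simp add: mult.commute)
  finally show ?case .
qed

lemma lt_div_succ: "0 < (q::nat) \<Longrightarrow> x < (x div q + 1) * q"
proof -
  assume q: "0 < q"
  have "x = x div q * q + x mod q" by simp
  moreover have "x mod q < q" using q by simp
  moreover have "(x div q + 1) * q = x div q * q + q" by (simp add: distrib_right)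
  ultimately show ?thesis by linarith
qed

lemma split_pt:
  fixes x y m :: nat
  assumes "x < y" "y < 2^m"
  shows "\<exists>j<m. x < (x div 2^j + 1) * 2^j \<and> (x div 2^j + 1) * 2^j = y div 2^j * 2^j"
proof -
  let ?P = "\<lambda>j. x div 2^j = (y::nat) div 2^j"
  have Pm: "?P m" using assms by simp
  define j' where "j' = (LEAST j. ?P j)"
  have Pj': "?P j'" unfolding j'_def by (rule LeastI[of ?P m, OF Pm])
  have j'm: "j' \<le> m" unfolding j'_def by (rule Least_le[of ?P m, OF Pm])
  have "j' \<noteq> 0"
  proof
    assume "j' = 0" with Pj' have "x = y" by simp
    with assms show False by simp
  qed
  then obtain j where j: "j' = Suc j" by (cases j') auto
  have nPj: "\<not> ?P j" using not_less_Least[of j ?P] j unfolding j'_def by simp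
  have dx: "x div 2^j div 2 = x div 2^(Suc j)" by (metis div_mult2_eq power_Suc2)
  have dy: "y div 2^j div 2 = y div 2^(Suc j)" by (metis div_mult2_eq power_Suc2)
  have PSj: "x div 2^j div 2 = y div 2^j div 2" using Pj' j dx dy by simp
  have le: "x div 2^j \<le> y div 2^j" using assms(1) by (simp add: div_le_mono)
  have aux: "\<And>a b::nat. a div 2 = b div 2 \<Longrightarrow> a \<le> b \<Longrightarrow> a \<noteq> b \<Longrightarrow> b = a+1" by presburger
  have b: "y div 2^j = x div 2^j + 1" using aux[OF PSj le nPj] .
  show ?thesis using j j'm b lt_div_succ[of "2^j" x] by (intro exI[of _ j]) auto
qed

lemma csn_trans: "x \<le> z \<Longrightarrow> z \<le> y \<Longrightarrow> csn l u x a z b \<Longrightarrow> csn l u z b y c \<Longrightarrow> csn l u x a y c"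
  unfolding csn_def using sum.atLeastLessThan_concat[of x z y l] sum.atLeastLessThan_concat[of x z y u]
  by auto

lemma prop_csn:
  assumes g: "g \<in> bounded_derivative_property n l u" and "1 \<le> x" "x \<le> y" "y \<le> n"
  shows "csn l u x (g x) y (g y)"
  using assms(3,4)
proof (induction y rule: dec_induct)
  case base then show ?case by (simp add: csn_def)
next
  case (step k)
  have "k \<in> {1..n-1}" using step assms(2) by auto
  with g have d: "l k \<le> g (k+1) - g k \<and> g (k+1) - g k \<le> u k"
    unfolding bounded_derivative_property_def by blast
  have ih: "csn l u x (g x) k (g k)" using step by simp
  show ?case using ih d step(1) unfolding csn_def by (simp add: sum.atLeastLessThan_Suc)
qed

lemma maxdiff:
  fixes F E :: "nat \<Rightarrow> real"
  assumes "finite S" "S \<noteq> {}" "\<forall>s\<in>S. a \<le> F s - E s \<and> F s - E s \<le> b"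
  shows "a \<le> Max (F ` S) - Max (E ` S) \<and> Max (F ` S) - Max (E ` S) \<le> b"
proof -
  have "Max (E ` S) \<in> E ` S" using assms by (intro Max_in) auto
  then obtain s0 where s0: "s0 \<in> S" "E s0 = Max (E ` S)" by force
  have "Max (F ` S) \<in> F ` S" using assms by (intro Max_in) auto
  then obtain s1 where s1: "s1 \<in> S" "F s1 = Max (F ` S)" by force
  have "F s0 \<le> Max (F ` S)" using s0 assms by simp
  moreover have "E s1 \<le> Max (E ` S)" using s1 assms by simp
  ultimately show ?thesis using s0 s1 assms(3) by force
qed

lemma extend:
  assumes "finite S" "S \<subseteq> {1..n}" "\<forall>t\<in>{1..n-1}. l t \<le> u t"
    "\<forall>x\<in>S. \<forall>y\<in>S. x < y \<longrightarrow> csn l u x (f x) y (f y)"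
  shows "\<exists>g\<in>bounded_derivative_property n l u. \<forall>x\<in>S. f x = g x"
proof (cases "S = {}")
  case True
  have "(\<lambda>t. sum l {0..<t}) \<in> bounded_derivative_property n l u"
    using assms(3) unfolding bounded_derivative_property_def by auto
  thus ?thesis using True by blast
next
  case False
  define hs where "hs s t = (if s \<le> t then f s + sum l {s..<t} else f s - sum u {t..<s})" for s t
  define g where "g t = Max ((\<lambda>s. hs s t) ` S)" for t
  have "g \<in> bounded_derivative_property n l u"
    unfolding bounded_derivative_property_def
  proof (intro CollectI ballI)
    fix t assume t: "t \<in> {1..n-1}"
    have "\<forall>s\<in>S. l t \<le> hs s (t+1) - hs s t \<and> hs s (t+1) - hs s t \<le> u t"
    proof
      fix s assume "s \<in> S"
      show "l t \<le> hs s (t+1) - hs s t \<and> hs s (t+1) - hs s t \<le> u t"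
      proof (cases "s \<le> t")
        case True
        then show ?thesis using assms(3) t by (simp add: hs_def sum.atLeastLessThan_Suc)
      next
        case False
        then show ?thesis using assms(3) t by (simp add: hs_def sum.atLeast_Suc_lessThan)
      qed
    qed
    thus "l t \<le> g (t+1) - g t \<and> g (t+1) - g t \<le> u t"
      unfolding g_def using maxdiff[OF assms(1) False, where a="l t" and b="u t" and F="\<lambda>s. hs s (t+1)" and E="\<lambda>s. hs s t"] by blast
  qed
  moreover have "\<forall>x\<in>S. f x = g x"
  proof
    fix x assume x: "x \<in> S"
    have "Max ((\<lambda>s. hs s x) ` S) = f x"
    proof (rule Max_eqI)
      show "finite ((\<lambda>s. hs s x) ` S)" using assms(1) by simp
      show "f x \<in> (\<lambda>s. hs s x) ` S" using x by (force simp: hs_def)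
      fix y assume "y \<in> (\<lambda>s. hs s x) ` S"
      then obtain s where s: "s \<in> S" "y = hs s x" by blast
      show "y \<le> f x"
      proof (cases "s < x")
        case True
        have "csn l u s (f s) x (f x)" using assms(4) s(1) x True by blast
        then show ?thesis using True s by (auto simp: hs_def csn_def)
      next
        case False
        show ?thesis
        proof (cases "s = x")
          case True then show ?thesis using s by (simp add: hs_def)
        next
          case False
          with \<open>\<not> s < x\<close> have "x < s" by simp
          have "csn l u x (f x) s (f s)" using assms(4) s(1) x \<open>x < s\<close> by blast
          then show ?thesis using \<open>x < s\<close> s by (auto simp: hs_def csn_def)
        qed
      qed
    qed
    thus "f x = g x" by (simp add: g_def)
  qed
  ultimately show ?thesis by blast
qed


definition gset :: "nat \<Rightarrow> (nat\<Rightarrow>real) \<Rightarrow> (nat\<Rightarrow>real) \<Rightarrow> (nat\<Rightarrow>real) \<Rightarrow> nat \<Rightarrow> nat set" where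
  "gset n l u f m = {x\<in>{1..n}. \<forall>i<2*m. qpt x i \<in> {1..n} \<longrightarrow>
      (x < qpt x i \<longrightarrow> csn l u x (f x) (qpt x i) (f (qpt x i))) \<and>
      (qpt x i < x \<longrightarrow> csn l u (qpt x i) (f (qpt x i)) x (f x))}"

lemma bad_blk:
  assumes "x \<in> {1..n}" "x \<notin> gset n l u f m"
  shows "\<not> okh n l u (h0 @ blk f m x @ t)"
proof
  assume ok: "okh n l u (h0 @ blk f m x @ t)"
  from assms obtain i where i: "i < 2*m" "qpt x i \<in> {1..n}"
    "\<not> ((x < qpt x i \<longrightarrow> csn l u x (f x) (qpt x i) (f (qpt x i))) \<and>
      (qpt x i < x \<longrightarrow> csn l u (qpt x i) (f (qpt x i)) x (f x)))"
    unfolding gset_def by blast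
  have e1: "(Sample, x, f x) \<in> set (h0 @ blk f m x @ t)" by (simp add: blk_def)
  have e2: "(Query (qpt x i), qpt x i, f (qpt x i)) \<in> set (h0 @ blk f m x @ t)"
    using i(1) by (auto simp: blk_def)
  show False using ok e1 e2 i assms(1) unfolding okh_def
    by (metis fst_conv snd_conv)
qed

lemma gset_cons:
  assumes "n < 2^m" "x \<in> gset n l u f m" "y \<in> gset n l u f m" "x < y"
  shows "csn l u x (f x) y (f y)"
proof -
  have y: "y \<le> n" "x \<ge> 1" using assms(2,3) by (auto simp: gset_def)
  obtain j where j: "j < m" "x < (x div 2^j + 1) * 2^j" "(x div 2^j + 1) * 2^j = y div 2^j * 2^j"
    using split_pt[of x y m] assms(1,4) y by auto
  define z where "z = (x div 2^j + 1) * 2^j"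
  have zy: "z \<le> y" using j(3) unfolding z_def by (metis div_times_less_eq_dividend)
  have xz: "x < z" using j(2) z_def by simp
  have zr: "z \<in> {1..n}" using zy xz y by auto
  have q1: "qpt x (2*j+1) = z" by (simp add: qpt_def z_def)
  have "qpt y (2*j) = y div 2^j * 2^j" by (simp add: qpt_def)
  hence q2: "qpt y (2*j) = z" using j(3) unfolding z_def by simp
  have i1: "2*j+1 < 2*m" and i2: "2*j < 2*m" using j(1) by auto
  have gx: "\<forall>i<2*m. qpt x i \<in> {1..n} \<longrightarrow> (x < qpt x i \<longrightarrow> csn l u x (f x) (qpt x i) (f (qpt x i)))"
    using assms(2) unfolding gset_def by blast
  have gy: "\<forall>i<2*m. qpt y i \<in> {1..n} \<longrightarrow> (qpt y i < y \<longrightarrow> csn l u (qpt y i) (f (qpt y i)) y (f y))"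
    using assms(3) unfolding gset_def by blast
  have c1: "csn l u x (f x) z (f z)" using gx[rule_format, OF i1] q1 zr xz by simp
  show ?thesis
  proof (cases "z = y")
    case True then show ?thesis using c1 by simp
  next
    case False
    hence "z < y" using zy by simp
    hence c2: "csn l u z (f z) y (f y)"
      using gy[rule_format, OF i2] q2 zr by simp
    show ?thesis using csn_trans[OF _ zy c1 c2] xz by simp
  qed
qed


lemma accept_eq:
  "accept_prob \<lparr>next_action = na, decide = (\<lambda>h. return_pmf (P h)), num_queries = q\<rparr> D f
    = measure_pmf.prob (run_tester na D f q []) {h. P h}"
  unfolding accept_prob_def by (simp add: map_pmf_def[symmetric] vimage_def)

theorem theorem4p4:
  fixes eps :: real and n :: nat and l u :: "nat \<Rightarrow> real"
  assumes "eps > 0"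
    and "\<forall>t\<in>{1..n-1}. l t < u t"
  shows "\<exists>T. is_df_tester n (bounded_derivative_property n l u) eps T \<and>
             real (num_queries T) \<le> 24 / eps * log 2 (real n)"
proof -
  let ?P = "bounded_derivative_property n l u"
  have lu: "\<forall>t\<in>{1..n-1}. l t \<le> u t" using assms(2) by (simp add: less_imp_le)
  define m where "m = (LEAST m. n < (2::nat)^m)"
  have nm: "n < 2^m" unfolding m_def by (rule LeastI[of _ n]) (rule less_exp)
  define k where "k = (if eps \<ge> 1 \<or> n \<le> 1 then 0 else nat \<lceil>3/eps\<rceil>)"
  define T where "T = \<lparr>next_action = nact m, decide = (\<lambda>h. return_pmf (okh n l u h)),
      num_queries = k*(2*m+1)\<rparr>"
  have tester: "is_df_tester n ?P eps T"
    unfolding is_df_tester_def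
  proof (intro allI impI conjI)
    fix D f assume supp: "set_pmf D \<subseteq> {1..n}"
    let ?R = "run_tester (nact m) D f (k*(2*m+1)) []"
    have acc: "accept_prob T D f = measure_pmf.prob ?R {h. okh n l u h}"
      unfolding T_def by (rule accept_eq)
    {
      assume "in_prop n ?P f"
      then obtain g where g: "g \<in> ?P" "\<forall>x\<in>{1..n}. f x = g x" unfolding in_prop_def by blast
      have "\<forall>h\<in>set_pmf ?R. okh n l u h"
      proof
        fix h assume "h \<in> set_pmf ?R"
        from run_set[OF this] have vals: "\<forall>e\<in>set h. snd (snd e) = f (fst (snd e))" by auto
        show "okh n l u h" unfolding okh_def
        proof (intro ballI impI)
          fix e e' assume ee: "e \<in> set h" "e' \<in> set h" "fst (snd e) \<in> {1..n}" "fst (snd e') \<in> {1..n}"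
            "fst (snd e) < fst (snd e')"
          have "csn l u (fst (snd e)) (g (fst (snd e))) (fst (snd e')) (g (fst (snd e')))"
            using prop_csn[OF g(1)] ee(3-5) by auto
          thus "csn l u (fst (snd e)) (snd (snd e)) (fst (snd e')) (snd (snd e'))"
            using vals ee g(2) by simp
        qed
      qed
      hence "measure_pmf.prob ?R {h. okh n l u h} = 1"
        by (subst measure_pmf.prob_eq_1) (auto simp: AE_measure_pmf_iff)
      thus "accept_prob T D f > 2/3" using acc by simp
    }
    {
      assume far: "far_from D ?P eps f"
      show "1 - accept_prob T D f > 2/3"
      proof (cases "eps \<ge> 1 \<or> n \<le> 1")
        case True
        show ?thesis
        proof (cases "eps \<ge> 1")
          case True
          obtain g where "g \<in> ?P" using extend[of "{}" n l u f] lu by auto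
          with far have "measure_pmf.prob D {x. f x \<noteq> g x} > eps" unfolding far_from_def by blast
          moreover have "measure_pmf.prob D {x. f x \<noteq> g x} \<le> 1" by simp
          ultimately show ?thesis using True by simp
        next
          case False
          with \<open>eps \<ge> 1 \<or> n \<le> 1\<close> have "n \<le> 1" by simp
          hence "f \<in> ?P" unfolding bounded_derivative_property_def by auto
          with far have "measure_pmf.prob D {x. f x \<noteq> f x} > eps" unfolding far_from_def by blast
          thus ?thesis using assms(1) by simp
        qed
      next
        case False
        hence eps1: "eps < 1" and k: "k = nat \<lceil>3/eps\<rceil>" by (auto simp: k_def)
        let ?G = "gset n l u f m"
        have Gsub: "?G \<subseteq> {1..n}" by (auto simp: gset_def)
        have "\<forall>x\<in>?G. \<forall>y\<in>?G. x < y \<longrightarrow> csn l u x (f x) y (f y)"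
          using gset_cons[OF nm] by blast
        then obtain g where g: "g \<in> ?P" "\<forall>x\<in>?G. f x = g x"
          using extend[of ?G n l u f] Gsub lu finite_subset by blast
        with far have pf: "measure_pmf.prob D {x. f x \<noteq> g x} > eps" unfolding far_from_def by blast
        have "{x. f x \<noteq> g x} \<subseteq> UNIV - ?G" using g(2) by auto
        hence "measure_pmf.prob D {x. f x \<noteq> g x} \<le> measure_pmf.prob D (UNIV - ?G)"
          by (intro measure_pmf.finite_measure_mono) auto
        also have "\<dots> = 1 - measure_pmf.prob D ?G"
          using measure_pmf.prob_compl[of ?G D] by simp
        finally have pG: "measure_pmf.prob D ?G < 1 - eps" using pf by simp
        define p where "p = measure_pmf.prob D ?G"
        have p0: "0 \<le> p" unfolding p_def by simp
        have bad: "\<forall>x\<in>set_pmf D. x \<notin> ?G \<longrightarrow> (\<forall>h0 t. \<not> okh n l u (h0 @ blk f m x @ t))"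
          using bad_blk supp by blast
        have "emeasure (measure_pmf ?R) {h. okh n l u h} \<le> emeasure (measure_pmf D) ?G ^ k"
          using far_bound[OF bad, of "[]" k] by simp
        hence "ennreal (measure_pmf.prob ?R {h. okh n l u h}) \<le> ennreal (p ^ k)"
          by (simp add: measure_pmf.emeasure_eq_measure p_def ennreal_power p0)
        hence a1: "accept_prob T D f \<le> p ^ k"
          using acc p0 by (simp add: ennreal_le_iff)
        have "p ^ k \<le> (1 - eps) ^ k" using p0 pG unfolding p_def by (intro power_mono) auto
        also have "\<dots> \<le> exp (-eps) ^ k"
          using eps1 exp_ge_add_one_self[of "-eps"] by (intro power_mono) auto
        also have "\<dots> = exp (- (eps * k))" by (simp add: exp_of_nat_mult[symmetric] mult.commute)
        also have "\<dots> \<le> exp (-3)"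
        proof -
          have "real k \<ge> 3/eps" unfolding k by linarith
          hence "eps * k \<ge> 3" using assms(1) by (simp add: field_simps)
          thus ?thesis by simp
        qed
        also have "\<dots> < 1/3"
        proof -
          have "exp (3::real) \<ge> 4" using exp_ge_add_one_self[of 3] by simp
          thus ?thesis by (simp add: exp_minus field_simps)
        qed
        finally show ?thesis using a1 by simp
      qed
    }
  qed
  have bound: "real (k*(2*m+1)) \<le> 24 / eps * log 2 (real n)"
  proof (cases "eps \<ge> 1 \<or> n \<le> 1")
    case True
    hence "k = 0" by (simp add: k_def)
    moreover have "log 2 (real n) \<ge> 0"
      by (cases "n = 0") (auto simp: log_def)
    ultimately show ?thesis using assms(1) by simp
  next
    case False
    hence eps1: "eps < 1" and n2: "n \<ge> 2" and k: "k = nat \<lceil>3/eps\<rceil>" by (auto simp: k_def)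
    have m1: "m \<ge> 1"
    proof (rule ccontr)
      assume "\<not> m \<ge> 1" hence "m = 0" by simp
      with nm n2 show False by simp
    qed
    have "\<not> n < 2^(m-1)" unfolding m_def
      by (rule not_less_Least) (use m1 in \<open>simp add: m_def[symmetric]\<close>)
    hence "2^(m-1) \<le> n" by simp
    hence "real (m-1) \<le> log 2 (real n)"
      by (intro le_log_of_power) (auto simp: of_nat_power[symmetric] simp del: of_nat_power)
    moreover have "1 \<le> log 2 (real n)"
      using le_log_of_power[of 2 1 "real n"] n2 by simp
    ultimately have Bb: "real (2*m+1) \<le> 5 * log 2 (real n)" using m1 by (simp add: of_nat_diff)
    have kb: "real k \<le> 4 / eps"
    proof -
      have "real k \<le> 3/eps + 1" unfolding k using of_int_ceiling_le_add_one[of "3/eps"] assms(1) by simp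
      also have "\<dots> \<le> 4/eps" using assms(1) eps1 by (simp add: field_simps)
      finally show ?thesis .
    qed
    have "real (k*(2*m+1)) = real k * real (2*m+1)" by (simp only: of_nat_mult)
    also have "\<dots> \<le> (4/eps) * (5 * log 2 (real n))"
      by (rule mult_mono[OF kb Bb]) (use assms(1) in auto)
    also have "\<dots> \<le> 24 / eps * log 2 (real n)"
      using assms(1) \<open>1 \<le> log 2 (real n)\<close> by (simp add: field_simps)
    finally show ?thesis .
  qed
  show ?thesis using tester bound by (intro exI[of _ T]) (simp add: T_def)
qed

end
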